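(* Let $\Gamma$ be an extended Dynkin graph with standard integral Cartan matrix, and let $v\in\mathbb{R}^I$ be any configuration. Suppose that it is possible, beginning with $v$, to fire $r$ vertices (counted with multiplicity) of amplitude $<-1$ successively until there are no vertices of amplitude $<-1$ left. Consider any other sequence, beginning with $v$, of firings of $s$ vertices of amplitude $<-1$. Then $s\le r$, and this sequence can be extended to a sequence of $r$ firings of vertices of amplitude $<-1$ which terminates at the same configuration as the first sequence.
   Context: $\Gamma$ is an extended Dynkin graph (Dynkin diagram of an affine Weyl group) with vertex set $I$ and standard integral generalized Cartan matrix $C=(c_{ij})$. Configurations are $v\in\mathbb{R}^I$. Firing vertex $i$ replaces $v$ by $f_i(v)$, where $f_i(v)_i=-v_i$, $f_i(v)_j=v_j-c_{ij}v_i$ if $j$ is adjacent to $i$, and $f_i(v)_j=v_j$ otherwise. "Firing a vertex of amplitude $<-1$" means firing $i$ when the current value $v_i$ satisfies $v_i<-1$. *)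

theory Defs
  imports Complex_Main
begin

definition gen_cartan :: "('i \<Rightarrow> 'i \<Rightarrow> int) \<Rightarrow> bool" where
  "gen_cartan C \<longleftrightarrow> (\<forall>i. C i i = 2) \<and> (\<forall>i j. i \<noteq> j \<longrightarrow> C i j \<le> 0)
     \<and> (\<forall>i j. C i j = 0 \<longleftrightarrow> C j i = 0)"

definition adjacent :: "('i \<Rightarrow> 'i \<Rightarrow> int) \<Rightarrow> 'i \<Rightarrow> 'i \<Rightarrow> bool" where
  "adjacent C i j \<longleftrightarrow> i \<noteq> j \<and> C i j \<noteq> 0"

definition indecomposable :: "('i \<Rightarrow> 'i \<Rightarrow> int) \<Rightarrow> bool" where
  "indecomposable C \<longleftrightarrow> (\<forall>i j. (adjacent C)\<^sup>*\<^sup>* i j)"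

text \<open>Kac's definition of affine type: an indecomposable GCM admitting a vector
  with all entries positive in its kernel.  These are exactly the
  (generalized Cartan matrices of) extended Dynkin diagrams.\<close>
definition extended_dynkin :: "('i::finite \<Rightarrow> 'i \<Rightarrow> int) \<Rightarrow> bool" where
  "extended_dynkin C \<longleftrightarrow> gen_cartan C \<and> indecomposable C \<and>
     (\<exists>u :: 'i \<Rightarrow> real. (\<forall>i. u i > 0) \<and> (\<forall>i. (\<Sum>j\<in>UNIV. of_int (C i j) * u j) = 0))"

definition fire :: "('i \<Rightarrow> 'i \<Rightarrow> int) \<Rightarrow> 'i \<Rightarrow> ('i \<Rightarrow> real) \<Rightarrow> ('i \<Rightarrow> real)" where
  "fire C i v = (\<lambda>j. if j = i then - v i
                     else if adjacent C i j then v j - of_int (C i j) * v i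
                     else v j)"

fun legal_seq :: "('i \<Rightarrow> 'i \<Rightarrow> int) \<Rightarrow> ('i \<Rightarrow> real) \<Rightarrow> 'i list \<Rightarrow> bool" where
  "legal_seq C v [] = True"
| "legal_seq C v (i # is) = (v i < -1 \<and> legal_seq C (fire C i v) is)"

fun run :: "('i \<Rightarrow> 'i \<Rightarrow> int) \<Rightarrow> ('i \<Rightarrow> real) \<Rightarrow> 'i list \<Rightarrow> ('i \<Rightarrow> real)" where
  "run C v [] = v"
| "run C v (i # is) = run C (fire C i v) is"

definition terminal :: "('i \<Rightarrow> real) \<Rightarrow> bool" where
  "terminal v \<longleftrightarrow> (\<forall>i. \<not> v i < -1)"

end

theory Submission
  imports Defs
begin

lemma fire_eq:
  assumes "gen_cartan C"
  shows "fire C i v = (\<lambda>k. v k - of_int (C i k) * v i)"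
  using assms unfolding fire_def gen_cartan_def adjacent_def
  by (auto simp: fun_eq_iff)

lemma legal_append: "legal_seq C v (a @ b) \<longleftrightarrow> legal_seq C v a \<and> legal_seq C (run C v a) b"
  by (induction a arbitrary: v) auto

lemma run_append: "run C v (a @ b) = run C (run C v a) b"
  by (induction a arbitrary: v) auto

fun alt :: "'i \<Rightarrow> 'i \<Rightarrow> nat \<Rightarrow> 'i list" where
  "alt i j 0 = []"
| "alt i j (Suc n) = i # alt j i n"

lemma length_alt[simp]: "length (alt i j n) = n"
  by (induction n arbitrary: i j) auto

definition Inv :: "('i \<Rightarrow> 'i \<Rightarrow> int) \<Rightarrow> ('i \<Rightarrow> real) \<Rightarrow> 'i \<Rightarrow> 'i \<Rightarrow> bool" where
  "Inv C v i j \<longleftrightarrow> v i < -1 \<and> v j - of_int (C i j) * v i < -1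
     \<and> 2 * v j \<le> of_int (C i j) * v i"

lemma Inv_step:
  assumes gc: "gen_cartan C" and ij: "i \<noteq> j" and pr: "C i j * C j i \<ge> 4"
    and I: "Inv C v i j"
  shows "Inv C (fire C i v) j i"
proof -
  have Cii: "C i i = 2" using gc by (simp add: gen_cartan_def)
  define P where "P = - real_of_int (C i j)"
  define Q where "Q = - real_of_int (C j i)"
  have PQ: "P * Q \<ge> 4" unfolding P_def Q_def
  proof -
    have "real_of_int (C i j * C j i) \<ge> 4" using pr by linarith
    thus "- real_of_int (C i j) * - real_of_int (C j i) \<ge> 4" by simp
  qed
  define X where "X = - v i"
  define Z where "Z = - (v j + P * v i)"
  have X1: "X > 1" using I unfolding Inv_def X_def by simp
  have Z1: "Z > 1" using I unfolding Inv_def Z_def P_def by simp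
  have h: "2 * v j \<le> P * X" using I unfolding Inv_def P_def X_def by simp
  have Zge: "2 * Z \<ge> P * X" unfolding Z_def using h unfolding X_def by (simp add: algebra_simps)
  have Pnn: "P \<ge> 0" and Qnn: "Q \<ge> 0"
    using gc ij unfolding P_def Q_def gen_cartan_def by auto
  have "Q * (2 * Z) \<ge> Q * (P * X)" using Zge Qnn by (rule mult_left_mono)
  moreover have "(P * Q) * X \<ge> 4 * X" using PQ X1 by (intro mult_right_mono) auto
  ultimately have QZ: "Q * Z \<ge> 2 * X" by (simp add: algebra_simps)
  have f: "fire C i v j = - Z" "fire C i v i = X"
    using ij Cii unfolding fire_eq[OF gc] Z_def P_def X_def by (auto simp: algebra_simps)
  show ?thesis unfolding Inv_def f using Z1 X1 QZ unfolding Q_def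
    by (auto simp: algebra_simps)
qed

lemma Inv_legal:
  assumes gc: "gen_cartan C" and ij: "i \<noteq> j" and pr: "C i j * C j i \<ge> 4"
    and I: "Inv C v i j"
  shows "legal_seq C v (alt i j n)"
  using ij pr I
proof (induction n arbitrary: v i j)
  case 0 then show ?case by simp
next
  case (Suc n)
  have "Inv C (fire C i v) j i" using Inv_step[OF gc Suc.prems] .
  moreover have "C j i * C i j \<ge> 4" using Suc.prems by (simp add: mult.commute)
  ultimately have "legal_seq C (fire C i v) (alt j i n)" using Suc.IH Suc.prems(1) by (metis)
  moreover have "v i < -1" using Suc.prems(3) by (simp add: Inv_def)
  ultimately show ?case by simp
qed

lemma Inv_init:
  assumes gc: "gen_cartan C" and ij: "i \<noteq> j" and pr: "C i j * C j i \<ge> 4"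
    and a: "v i < -1" and b: "v j < -1"
  shows "Inv C v i j"
proof -
  have "C i j \<le> 0" using gc ij by (simp add: gen_cartan_def)
  moreover have "C i j \<noteq> 0" using pr by auto
  ultimately have "real_of_int (C i j) \<le> -1" by simp
  hence "real_of_int (C i j) * v i \<ge> (-1) * v i" using a
    by (intro mult_right_mono_neg) auto
  thus ?thesis unfolding Inv_def using a b by auto
qed


lemma poly_case:
  assumes gc: "gen_cartan C" and ij: "i \<noteq> j" and a: "v i < -1" and b: "v j < -1"
    and cs: "(C i j, C j i) \<in> {(0,0), (-1,-1), (-1,-2), (-2,-1), (-1,-3), (-3,-1)}"
  shows "\<exists>m>0. legal_seq C v (alt i j m) \<and> legal_seq C v (alt j i m)
           \<and> run C v (alt i j m) = run C v (alt j i m)"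
proof -
  have Cii: "C i i = 2" "C j j = 2" using gc by (auto simp: gen_cartan_def)
  note F = fire_eq[OF gc] numeral_eq_Suc
  from cs consider "C i j = 0" "C j i = 0" | "C i j = -1" "C j i = -1"
    | "C i j = -1" "C j i = -2" | "C i j = -2" "C j i = -1"
    | "C i j = -1" "C j i = -3" | "C i j = -3" "C j i = -1" by auto
  then show ?thesis
  proof cases
    case 1 show ?thesis
      by (rule exI[of _ 2]) (use 1 Cii ij a b in \<open>auto simp: F fun_eq_iff algebra_simps\<close>)
  next
    case 2 show ?thesis
      by (rule exI[of _ 3]) (use 2 Cii ij a b in \<open>auto simp: F fun_eq_iff algebra_simps\<close>)
  next
    case 3 show ?thesis
      by (rule exI[of _ 4]) (use 3 Cii ij a b in \<open>auto simp: F fun_eq_iff algebra_simps\<close>)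
  next
    case 4 show ?thesis
      by (rule exI[of _ 4]) (use 4 Cii ij a b in \<open>auto simp: F fun_eq_iff algebra_simps\<close>)
  next
    case 5 show ?thesis
      by (rule exI[of _ 6]) (use 5 Cii ij a b in \<open>auto simp: F fun_eq_iff algebra_simps\<close>)
  next
    case 6 show ?thesis
      by (rule exI[of _ 6]) (use 6 Cii ij a b in \<open>auto simp: F fun_eq_iff algebra_simps\<close>)
  qed
qed


lemma diamond:
  assumes gc: "gen_cartan C" and ij: "i \<noteq> j" and a: "v i < -1" and b: "v j < -1"
  shows "(\<exists>m>0. legal_seq C v (alt i j m) \<and> legal_seq C v (alt j i m)
           \<and> run C v (alt i j m) = run C v (alt j i m))
         \<or> (\<forall>n. legal_seq C v (alt i j n))"
proof (cases "C i j * C j i \<ge> 4")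
  case True
  then show ?thesis using Inv_legal[OF gc ij True Inv_init[OF gc ij True a b]] by blast
next
  case False
  have nz: "C i j = 0 \<longleftrightarrow> C j i = 0" and le: "C i j \<le> 0" "C j i \<le> 0"
    using gc ij by (auto simp: gen_cartan_def)
  have "(C i j, C j i) \<in> {(0,0), (-1,-1), (-1,-2), (-2,-1), (-1,-3), (-3,-1)}"
  proof (cases "C i j = 0")
    case True then show ?thesis using nz by simp
  next
    case c: False
    define p where "p = - C i j"
    define q where "q = - C j i"
    have p1: "p \<ge> 1" and q1: "q \<ge> 1" using c nz le unfolding p_def q_def by auto
    have pq: "p * q < 4" using False unfolding p_def q_def by simp
    have "p \<le> p * q" using p1 q1 by simp
    hence p3: "p \<le> 3" using pq by linarith
    have "q \<le> p * q" using p1 q1 by simp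
    hence q3: "q \<le> 3" using pq by linarith
    have "p \<in> {1,2,3}" "q \<in> {1,2,3}" using p1 p3 q1 q3 by auto
    moreover have "C i j = - p" "C j i = - q" unfolding p_def q_def by simp_all
    ultimately show ?thesis using pq by auto
  qed
  then show ?thesis using poly_case[OF gc ij a b] by blast
qed

lemma main:
  assumes gc: "gen_cartan C"
  shows "legal_seq C v xs \<Longrightarrow> length xs = r \<Longrightarrow> terminal (run C v xs) \<Longrightarrow> legal_seq C v ys
    \<Longrightarrow> length ys \<le> r \<and> (\<exists>zs. legal_seq C v (ys @ zs) \<and> length (ys @ zs) = r
                        \<and> run C v (ys @ zs) = run C v xs)"
proof (induction r arbitrary: v xs ys rule: less_induct)
  case (less r)
  show ?case
  proof (cases ys)
    case Nil then show ?thesis using less.prems by auto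
  next
    case (Cons j ys')
    have vj: "v j < -1" and lys': "legal_seq C (fire C j v) ys'" using less.prems(4) Cons by auto
    show ?thesis
    proof (cases xs)
      case Nil
      then show ?thesis using less.prems(3) vj by (auto simp: terminal_def)
    next
      case (Cons i xs')
      have vi: "v i < -1" and lxs': "legal_seq C (fire C i v) xs'" using less.prems(1) Cons by auto
      have r: "r = Suc (length xs')" using less.prems(2) Cons by simp
      have term': "terminal (run C (fire C i v) xs')" using less.prems(3) Cons by simp
      have runx: "run C v xs = run C (fire C i v) xs'" using Cons by simp
      have IH: "\<And>w xs ys. legal_seq C w xs \<Longrightarrow> length xs = length xs' \<Longrightarrow> terminal (run C w xs)
        \<Longrightarrow> legal_seq C w ys \<Longrightarrow> length ys \<le> length xs' \<and> (\<exists>zs. legal_seq C w (ys @ zs)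
            \<and> length (ys @ zs) = length xs' \<and> run C w (ys @ zs) = run C w xs)"
        using less.IH[of "length xs'"] r by blast
      show ?thesis
      proof (cases "i = j")
        case True
        from IH[OF lxs' refl term', of ys'] lys' True
        obtain zs where "length ys' \<le> length xs'" "legal_seq C (fire C i v) (ys' @ zs)"
          "length (ys' @ zs) = length xs'" "run C (fire C i v) (ys' @ zs) = run C v xs"
          using runx by auto
        then show ?thesis using \<open>ys = j # ys'\<close> True vi r by (intro conjI exI[of _ zs]) auto
      next
        case False
        from diamond[OF gc False vi vj] show ?thesis
        proof
          assume "\<forall>n. legal_seq C v (alt i j n)"
          hence "legal_seq C v (alt i j (Suc (Suc (length xs'))))" by blast
          hence "legal_seq C (fire C i v) (alt j i (Suc (length xs')))" by simp
          from IH[OF lxs' refl term' this] show ?thesis by simp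
        next
          assume "\<exists>m>0. legal_seq C v (alt i j m) \<and> legal_seq C v (alt j i m)
           \<and> run C v (alt i j m) = run C v (alt j i m)"
          then obtain m where m: "m > 0" "legal_seq C v (alt i j m)" "legal_seq C v (alt j i m)"
            "run C v (alt i j m) = run C v (alt j i m)" by blast
          then obtain m' where mm: "m = Suc m'" by (cases m) auto
          have l1: "legal_seq C (fire C i v) (alt j i m')" using m(2) mm by simp
          have l2: "legal_seq C (fire C j v) (alt i j m')" using m(3) mm by simp
          have eq: "run C (fire C i v) (alt j i m') = run C (fire C j v) (alt i j m')"
            using m(4) mm by simp
          from IH[OF lxs' refl term' l1] obtain z1 where
            z1: "legal_seq C (fire C i v) (alt j i m' @ z1)" "length (alt j i m' @ z1) = length xs'"
              "run C (fire C i v) (alt j i m' @ z1) = run C v xs" using runx by auto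
          have lt: "legal_seq C (fire C j v) (alt i j m' @ z1)"
            using z1(1) l2 eq by (simp add: legal_append)
          have len: "length (alt i j m' @ z1) = length xs'" using z1(2) by simp
          have rt: "run C (fire C j v) (alt i j m' @ z1) = run C v xs"
            using z1(3) eq by (simp add: run_append)
          have termt: "terminal (run C (fire C j v) (alt i j m' @ z1))"
            using rt less.prems(3) by simp
          have "length (alt i j m' @ z1) < r" using len r by simp
          from less.IH[OF this lt refl termt lys'] len rt obtain zs where
            zs: "length ys' \<le> length xs'" "legal_seq C (fire C j v) (ys' @ zs)"
              "length (ys' @ zs) = length xs'" "run C (fire C j v) (ys' @ zs) = run C v xs"
            by auto
          then show ?thesis using \<open>ys = j # ys'\<close> vj r by (intro conjI exI[of _ zs]) auto
        qed
      qed
    qed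
  qed
qed

theorem lemma3p4:
  fixes C :: "'i::finite \<Rightarrow> 'i \<Rightarrow> int" and v :: "'i \<Rightarrow> real"
    and xs ys :: "'i list" and r s :: nat
  assumes "extended_dynkin C"
    and "legal_seq C v xs" and "length xs = r" and "terminal (run C v xs)"
    and "legal_seq C v ys" and "length ys = s"
  shows "s \<le> r \<and> (\<exists>zs. legal_seq C v (ys @ zs) \<and> length (ys @ zs) = r
                        \<and> run C v (ys @ zs) = run C v xs)"
proof -
  have gc: "gen_cartan C" using assms(1) by (simp add: extended_dynkin_def)
  show ?thesis using main[OF gc assms(2,3,4,5)] assms(6) by blast
qed

end
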